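(* In the model described in the context, suppose $\triangle C=0$, and let $X(0)$ be the set of symmetric Stackelberg equilibria (symmetric leader reactions when all followers' forward positions are $0$), which depends on $\alpha_x$. (1) There exists a unique $\bar y<k$ such that, for $y\in[0,k]$, there exists $x\in X(0)$ with $y_j(\mathbf0,x\mathbf1)=y$ if and only if $y\le\bar y$ or $y=k$. Moreover $\bar y=\big(1+O(\tfrac1{\sqrt N})\big)\frac k2$. (2) There exists a unique $\bar\alpha_x\in\mathbb{R}_+$ such that $\alpha_x\le\bar\alpha_x$ iff there exists $x\in X(0)$ with $y_j(\mathbf0,x\mathbf1)\le\bar y$, and a unique $\underline\alpha_x\le\bar\alpha_x$ such that $\alpha_x\ge\underline\alpha_x$ iff there exists $x\in X(0)$ with $y_j(\mathbf0,x\mathbf1)=k$. Moreover $|X(0)|=2$ for all $\alpha_x\in[\underline\alpha_x,\bar\alpha_x]$.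
   Context: Model: $M\ge1$ leaders and $N\ge2$ followers; inverse demand $P(q)=\alpha-\beta q$, $\alpha,\beta>0$; leader marginal cost $C$, follower marginal cost $c$, $c\ge C>0$; follower capacity $k>0$. Leader $i$ produces $x_i\ge0$; follower $j$ has forward position $f_j\in\mathbb{R}$ and chooses spot production $y_j\in[0,k]$. Given $\mathbf f,\mathbf x$, the spot market is the game among followers where follower $j$ chooses $y_j\in[0,k]$ to maximize $P(\sum_ix_i+\sum_{j'}y_{j'})(y_j-f_j)-cy_j$; its unique Nash equilibrium is $\mathbf y(\mathbf f,\mathbf x)=(y_1(\mathbf f,\mathbf x),\dots,y_N(\mathbf f,\mathbf x))$. Leader $i$'s payoff is $\psi_i=(P(\sum_ix_i+\sum_{j'}y_{j'}(\mathbf f,\mathbf x))-C)x_i$; $\psi_i(\bar x;x\mathbf1,\mathbf f)$ denotes this payoff when leader $i$ produces $\bar x$ and all other leaders produce $x$. $X(0)=\{x\in\mathbb{R}_+:\psi_i(x;x\mathbf1,\mathbf0)\ge\psi_i(\bar x;x\mathbf1,\mathbf0)\ \forall\bar x\in\mathbb{R}_+,\ \forall i\}$. $\alpha_x=(\alpha-C)/\beta$, $\triangle C=(c-C)/\beta$. $O(\cdot)$ is standard Landau notation. *)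

theory Defs
  imports "HOL-Analysis.Analysis" "HOL-Library.Landau_Symbols"
begin

text \<open>Leaders are indexed by {..<M}, followers by {..<N}. Vectors are functions nat => real.\<close>

definition invdem :: "real \<Rightarrow> real \<Rightarrow> real \<Rightarrow> real" where
  "invdem \<alpha> \<beta> q = \<alpha> - \<beta> * q"

definition follower_payoff ::
  "real \<Rightarrow> real \<Rightarrow> real \<Rightarrow> nat \<Rightarrow> nat \<Rightarrow> (nat \<Rightarrow> real) \<Rightarrow> (nat \<Rightarrow> real) \<Rightarrow> (nat \<Rightarrow> real) \<Rightarrow> nat \<Rightarrow> real" where
  "follower_payoff \<alpha> \<beta> c M N f x y j =
     invdem \<alpha> \<beta> ((\<Sum>i<M. x i) + (\<Sum>j'<N. y j')) * (y j - f j) - c * y j"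

definition spot_NE ::
  "real \<Rightarrow> real \<Rightarrow> real \<Rightarrow> real \<Rightarrow> nat \<Rightarrow> nat \<Rightarrow> (nat \<Rightarrow> real) \<Rightarrow> (nat \<Rightarrow> real) \<Rightarrow> (nat \<Rightarrow> real) \<Rightarrow> bool" where
  "spot_NE \<alpha> \<beta> c k M N f x y \<longleftrightarrow>
     (\<forall>j. j \<ge> N \<longrightarrow> y j = 0) \<and>
     (\<forall>j<N. 0 \<le> y j \<and> y j \<le> k \<and>
        (\<forall>z. 0 \<le> z \<and> z \<le> k \<longrightarrow>
           follower_payoff \<alpha> \<beta> c M N f x (y(j := z)) j \<le> follower_payoff \<alpha> \<beta> c M N f x y j))"

definition spot_y ::
  "real \<Rightarrow> real \<Rightarrow> real \<Rightarrow> real \<Rightarrow> nat \<Rightarrow> nat \<Rightarrow> (nat \<Rightarrow> real) \<Rightarrow> (nat \<Rightarrow> real) \<Rightarrow> nat \<Rightarrow> real" where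
  "spot_y \<alpha> \<beta> c k M N f x = (THE y. spot_NE \<alpha> \<beta> c k M N f x y)"

definition leader_payoff ::
  "real \<Rightarrow> real \<Rightarrow> real \<Rightarrow> real \<Rightarrow> real \<Rightarrow> nat \<Rightarrow> nat \<Rightarrow> (nat \<Rightarrow> real) \<Rightarrow> (nat \<Rightarrow> real) \<Rightarrow> nat \<Rightarrow> real" where
  "leader_payoff \<alpha> \<beta> C c k M N f x i =
     (invdem \<alpha> \<beta> ((\<Sum>i'<M. x i') + (\<Sum>j<N. spot_y \<alpha> \<beta> c k M N f x j)) - C) * x i"

definition psi ::
  "real \<Rightarrow> real \<Rightarrow> real \<Rightarrow> real \<Rightarrow> real \<Rightarrow> nat \<Rightarrow> nat \<Rightarrow> nat \<Rightarrow> real \<Rightarrow> real \<Rightarrow> (nat \<Rightarrow> real) \<Rightarrow> real" where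
  "psi \<alpha> \<beta> C c k M N i xbar x f =
     leader_payoff \<alpha> \<beta> C c k M N f ((\<lambda>_. x)(i := xbar)) i"

definition X0 :: "real \<Rightarrow> real \<Rightarrow> real \<Rightarrow> real \<Rightarrow> real \<Rightarrow> nat \<Rightarrow> nat \<Rightarrow> real set" where
  "X0 \<alpha> \<beta> C c k M N = {x. 0 \<le> x \<and>
     (\<forall>i<M. \<forall>xbar\<ge>0. psi \<alpha> \<beta> C c k M N i x x (\<lambda>_. 0) \<ge> psi \<alpha> \<beta> C c k M N i xbar x (\<lambda>_. 0))}"

definition y_sym :: "real \<Rightarrow> real \<Rightarrow> real \<Rightarrow> real \<Rightarrow> nat \<Rightarrow> nat \<Rightarrow> real \<Rightarrow> nat \<Rightarrow> real" where
  "y_sym \<alpha> \<beta> c k M N x j = spot_y \<alpha> \<beta> c k M N (\<lambda>_. 0) (\<lambda>_. x) j"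

definition alpha_x :: "real \<Rightarrow> real \<Rightarrow> real \<Rightarrow> real" where
  "alpha_x \<alpha> \<beta> C = (\<alpha> - C) / \<beta>"

definition deltaC :: "real \<Rightarrow> real \<Rightarrow> real \<Rightarrow> real" where
  "deltaC \<beta> C c = (c - C) / \<beta>"

end

theory Submission
  imports Defs
begin


definition clip :: "real \<Rightarrow> real \<Rightarrow> real" where "clip k t = max 0 (min k t)"

lemma sum_upd: "j < (N::nat) \<Longrightarrow> (\<Sum>j'<N. (y(j:=z)) j') = (\<Sum>j'<N. y j') - y j + (z::real)"
proof -
  assume j: "j < N"
  have "(\<Sum>j'<N. (y(j:=z)) j') = (y(j:=z)) j + (\<Sum>j'\<in>{..<N}-{j}. (y(j:=z)) j')"
    using j by (intro sum.remove) auto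
  also have "(\<Sum>j'\<in>{..<N}-{j}. (y(j:=z)) j') = (\<Sum>j'\<in>{..<N}-{j}. y j')"
    by (rule sum.cong) auto
  also have "(\<Sum>j'<N. y j') = y j + (\<Sum>j'\<in>{..<N}-{j}. y j')"
    using j by (simp add: sum.remove)
  ultimately show ?thesis by simp
qed

lemma fixpt:
  assumes k: "k > 0"
  shows "(0\<le>y \<and> y\<le>k \<and> (\<forall>z. 0\<le>z \<and> z\<le>k \<longrightarrow> (z-y)*(w-z) \<le> 0)) \<longleftrightarrow> y = clip k w"
proof
  assume h: "0\<le>y \<and> y\<le>k \<and> (\<forall>z. 0\<le>z \<and> z\<le>k \<longrightarrow> (z-y)*(w-z) \<le> 0)"
  define z where "z = (y + clip k w)/2"
  have z: "0 \<le> z" "z \<le> k" using h k unfolding z_def clip_def by auto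
  have P: "(z-y)*(w-z) \<le> 0" using h z by blast
  show "y = clip k w"
  proof (cases "w < 0")
    case True
    then have "clip k w = 0" unfolding clip_def using k by auto
    then have "z = y/2" using z_def by simp
    moreover have "(z-y)*(w-z) = (y/2)*(y/2 - w)" if "z = y/2" unfolding that by (simp add: algebra_simps)
    ultimately have "(y/2)*(y/2 - w) \<le> 0" using P by simp
    moreover have "y/2 - w > 0 \<or> y = 0" using True h by auto
    ultimately have "y = 0"
    proof -
      assume a1: "(y/2)*(y/2 - w) \<le> 0" and a2: "y/2 - w > 0 \<or> y = 0"
      show "y = 0"
      proof (rule ccontr)
        assume "y \<noteq> 0"
        then have "y/2 > 0" "y/2 - w > 0" using h a2 by auto
        then have "(y/2)*(y/2 - w) > 0" by (rule mult_pos_pos)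
        then show False using a1 by simp
      qed
    qed
    then show ?thesis using \<open>clip k w = 0\<close> by simp
  next
    case False
    show ?thesis
    proof (cases "w > k")
      case True
      then have "clip k w = k" unfolding clip_def using k by auto
      then have "z = (y+k)/2" using z_def by simp
      moreover have "(z-y)*(w-z) = ((k-y)/2)*(w - (y+k)/2)" if "z = (y+k)/2" unfolding that by (simp add: algebra_simps)
      ultimately have "((k-y)/2)*(w - (y+k)/2) \<le> 0" using P by simp
      moreover have "w - (y+k)/2 > 0" using True h by auto
      ultimately have "k - y \<le> 0"
      proof -
        assume a1: "((k-y)/2)*(w - (y+k)/2) \<le> 0" and a2: "w - (y+k)/2 > 0"
        show "k - y \<le> 0"
        proof (rule ccontr)
          assume "\<not> k - y \<le> 0"
          then have "(k-y)/2 > 0" by simp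
          then have "((k-y)/2)*(w - (y+k)/2) > 0" using a2 by (rule mult_pos_pos)
          then show False using a1 by simp
        qed
      qed
      then show ?thesis using \<open>clip k w = k\<close> h by simp
    next
      case F2: False
      then have "clip k w = w" unfolding clip_def using False by auto
      then have "z = (y+w)/2" using z_def by simp
      moreover have "(z-y)*(w-z) = ((w-y)/2)*((w-y)/2)" if "z = (y+w)/2" unfolding that by (simp add: field_simps)
      ultimately have "((w-y)/2)*((w-y)/2) \<le> 0" using P by simp
      then have "((w-y)/2)*((w-y)/2) = 0" using zero_le_square[of "(w-y)/2"] by linarith
      then have "(w-y)/2 = 0" by simp
      then have "w - y = 0" by simp
      then show ?thesis using \<open>clip k w = w\<close> by simp
    qed
  qed
next
  assume y: "y = clip k w"
  show "0\<le>y \<and> y\<le>k \<and> (\<forall>z. 0\<le>z \<and> z\<le>k \<longrightarrow> (z-y)*(w-z) \<le> 0)"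
  proof (intro conjI allI impI)
    show "0 \<le> y" "y \<le> k" using y k unfolding clip_def by auto
  next
    fix z assume z: "0\<le>z \<and> z\<le>k"
    show "(z-y)*(w-z) \<le> 0"
    proof (cases "w < 0")
      case True
      then have "y = 0" using y k unfolding clip_def by auto
      then show ?thesis using z True by (simp add: mult_nonneg_nonpos)
    next
      case False
      show ?thesis
      proof (cases "w > k")
        case True
        then have "y = k" using y k unfolding clip_def by auto
        then show ?thesis using z True by (simp add: mult_nonpos_nonneg)
      next
        case F2: False
        then have "y = w" using y False unfolding clip_def by auto
        then have "(z-y)*(w-z) = - ((z-w)*(z-w))" by (simp add: algebra_simps)
        then show ?thesis by simp
      qed
    qed
  qed
qed

lemma fix2:
  assumes k: "k > 0" and N: "(N::real) \<ge> 0"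
  shows "(v = clip k (u - N * v)) \<longleftrightarrow> (v = clip k (u/(N+1)))"
proof -
  have n: "N + 1 > 0" using N by simp
  show ?thesis
  proof (cases "u < 0")
    case True
    have "u/(N+1) < 0" using True n by (simp add: divide_neg_pos)
    then have c: "clip k (u/(N+1)) = 0" unfolding clip_def using k by simp
    show ?thesis
    proof
      assume v: "v = clip k (u - N * v)"
      have "v \<ge> 0" using v k unfolding clip_def by auto
      have "v \<le> 0"
      proof (rule ccontr)
        assume "\<not> v \<le> 0"
        moreover have "N * v \<ge> 0" using N \<open>\<not> v \<le> 0\<close> by simp
        ultimately have "u - N * v < 0" using True by linarith
        then have "v = 0" using v k unfolding clip_def by auto
        then show False using \<open>\<not> v \<le> 0\<close> by simp
      qed
      then show "v = clip k (u/(N+1))" using c \<open>v\<ge>0\<close> by simp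
    next
      assume "v = clip k (u/(N+1))"
      then have "v = 0" using c by simp
      then show "v = clip k (u - N * v)" using True unfolding clip_def by simp
    qed
  next
    case False
    show ?thesis
    proof (cases "u > (N+1)*k")
      case True
      then have "u/(N+1) > k" using n by (simp add: field_simps)
      then have c: "clip k (u/(N+1)) = k" unfolding clip_def using k by simp
      show ?thesis
      proof
        assume v: "v = clip k (u - N * v)"
        have vk: "v \<le> k" "v \<ge> 0" using v k unfolding clip_def by auto
        have "N * v \<le> N * k" using vk N by (intro mult_left_mono) auto
        then have "u - N * v > k" using True by (simp add: algebra_simps)
        then have "v = k" using v k unfolding clip_def by simp
        then show "v = clip k (u/(N+1))" using c by simp
      next
        assume "v = clip k (u/(N+1))"
        then have v: "v = k" using c by simp
        have "u - N*k > k" using True by (simp add: algebra_simps)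
        then show "v = clip k (u - N * v)" using v k unfolding clip_def by simp
      qed
    next
      case F2: False
      have ud: "0 \<le> u/(N+1)" "u/(N+1) \<le> k" using False F2 n by (auto simp: field_simps)
      then have c: "clip k (u/(N+1)) = u/(N+1)" unfolding clip_def by simp
      show ?thesis
      proof
        assume v: "v = clip k (u - N * v)"
        have vk: "v \<le> k" "v \<ge> 0" using v k unfolding clip_def by auto
        consider "u - N * v < 0" | "u - N * v > k" | "0 \<le> u - N * v \<and> u - N * v \<le> k" by linarith
        then show "v = clip k (u/(N+1))"
        proof cases
          case 1
          then have "v = 0" using v unfolding clip_def using k by simp
          then show ?thesis using 1 False by simp
        next
          case 2
          then have "v = k" using v k unfolding clip_def by simp
          then have "u > (N+1)*k" using 2 by (simp add: algebra_simps)
          then show ?thesis using F2 by simp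
        next
          case 3
          then have "v = u - N * v" using v unfolding clip_def by simp
          then have "v = u/(N+1)" using n by (simp add: field_simps)
          then show ?thesis using c by simp
        qed
      next
        assume "v = clip k (u/(N+1))"
        then have v: "v = u/(N+1)" using c by simp
        then have "u - N * v = v" using n by (simp add: field_simps)
        then show "v = clip k (u - N * v)" using v c by simp
      qed
    qed
  qed
qed


lemma fp:
  assumes b: "\<beta> > 0" and j: "j < N"
  shows "follower_payoff \<alpha> \<beta> c M N (\<lambda>_. 0) x (y(j:=z)) j
     = \<beta> * z * (((\<alpha>-c)/\<beta> - sum x {..<M}) - (sum y {..<N} - y j) - z)"
proof -
  have s: "sum (y(j:=z)) {..<N} = sum y {..<N} - y j + z" using j by (rule sum_upd)
  show ?thesis unfolding follower_payoff_def invdem_def s using b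
    by (simp add: field_simps)
qed

lemma spot_NE_iff:
  assumes b: "\<beta> > 0" and k: "k > 0"
  shows "spot_NE \<alpha> \<beta> c k M N (\<lambda>_. 0) x y \<longleftrightarrow>
    (\<forall>j. j \<ge> N \<longrightarrow> y j = 0) \<and>
    (\<forall>j<N. y j = clip k (((\<alpha>-c)/\<beta> - sum x {..<M}) - sum y {..<N}))"
proof -
  define w where "w = ((\<alpha>-c)/\<beta> - sum x {..<M}) - sum y {..<N}"
  have key: "(0 \<le> y j \<and> y j \<le> k \<and> (\<forall>z. 0 \<le> z \<and> z \<le> k \<longrightarrow>
           follower_payoff \<alpha> \<beta> c M N (\<lambda>_. 0) x (y(j := z)) j \<le> follower_payoff \<alpha> \<beta> c M N (\<lambda>_. 0) x y j))
         \<longleftrightarrow> y j = clip k w" if j: "j < N" for j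
  proof -
    have e: "follower_payoff \<alpha> \<beta> c M N (\<lambda>_. 0) x y j = follower_payoff \<alpha> \<beta> c M N (\<lambda>_. 0) x (y(j := y j)) j"
      by simp
    have "follower_payoff \<alpha> \<beta> c M N (\<lambda>_. 0) x (y(j := z)) j \<le> follower_payoff \<alpha> \<beta> c M N (\<lambda>_. 0) x y j
       \<longleftrightarrow> (z - y j) * (w - z) \<le> 0" for z
    proof -
      have "follower_payoff \<alpha> \<beta> c M N (\<lambda>_. 0) x (y(j := z)) j - follower_payoff \<alpha> \<beta> c M N (\<lambda>_. 0) x y j
          = \<beta> * ((z - y j) * (w - z))"
        unfolding e fp[OF b j] w_def using b by (simp add: field_simps)
      moreover have "\<beta> * ((z - y j) * (w - z)) \<le> 0 \<longleftrightarrow> (z - y j) * (w - z) \<le> 0"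
        using b by (auto simp: mult_le_0_iff)
      ultimately show ?thesis by linarith
    qed
    then show ?thesis using fixpt[OF k, of "y j" w] by simp
  qed
  show ?thesis unfolding spot_NE_def w_def[symmetric] using key by blast
qed

lemma spot_y_eq:
  assumes b: "\<beta> > 0" and k: "k > 0"
  shows "spot_y \<alpha> \<beta> c k M N (\<lambda>_. 0) x =
    (\<lambda>j. if j < N then clip k (((\<alpha>-c)/\<beta> - sum x {..<M})/(real N + 1)) else 0)"
proof -
  define u where "u = (\<alpha>-c)/\<beta> - sum x {..<M}"
  define v where "v = clip k (u/(real N + 1))"
  define Y where "Y = (\<lambda>j. if j < N then v else (0::real))"
  have sY: "sum Y {..<N} = real N * v" unfolding Y_def by simp
  have NE: "spot_NE \<alpha> \<beta> c k M N (\<lambda>_. 0) x Y"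
    unfolding spot_NE_iff[OF b k] u_def[symmetric] sY
  proof (intro conjI allI impI)
    fix j :: nat assume "N \<le> j" then show "Y j = 0" unfolding Y_def by simp
  next
    fix j assume j: "j < N"
    have "v = clip k (u - real N * v)" using fix2[OF k, of "real N" v u] unfolding v_def[symmetric] by simp
    then show "Y j = clip k (u - real N * v)" unfolding Y_def using j by simp
  qed
  have uniq: "y = Y" if y: "spot_NE \<alpha> \<beta> c k M N (\<lambda>_. 0) x y" for y
  proof -
    note yy = y[unfolded spot_NE_iff[OF b k] u_def[symmetric]]
    define v' where "v' = clip k (u - sum y {..<N})"
    have yj: "\<forall>j<N. y j = v'" using yy unfolding v'_def by blast
    have "sum y {..<N} = sum (\<lambda>_. v') {..<N}" using yj by (intro sum.cong) auto
    then have "sum y {..<N} = real N * v'" by simp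
    then have "v' = clip k (u - real N * v')" using v'_def by simp
    then have "v' = v" using fix2[OF k, of "real N" v' u] unfolding v_def[symmetric] by simp
    show "y = Y"
    proof
      fix j show "y j = Y j"
      proof (cases "j < N")
        case True then show ?thesis using yj \<open>v' = v\<close> unfolding Y_def by simp
      next
        case False then show ?thesis using yy unfolding Y_def by simp
      qed
    qed
  qed
  have "spot_y \<alpha> \<beta> c k M N (\<lambda>_. 0) x = Y"
    unfolding spot_y_def using NE uniq by (rule the_equality)
  then show ?thesis unfolding Y_def v_def u_def by simp
qed


definition G :: "nat \<Rightarrow> real \<Rightarrow> real \<Rightarrow> real \<Rightarrow> real" where
  "G N k b z = z * ((b - z) - real N * clip k ((b - z)/(real N + 1)))"

lemma psi_eq:
  assumes b: "\<beta> > 0" and k: "k > 0" and cC: "c = C" and i: "i < M"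
  shows "psi \<alpha> \<beta> C c k M N i xb x (\<lambda>_. 0) = \<beta> * G N k ((\<alpha>-C)/\<beta> - (real M - 1) * x) xb"
proof -
  define xv where "xv = (\<lambda>_::nat. x)(i := xb)"
  have sx: "sum xv {..<M} = (real M - 1) * x + xb"
    unfolding xv_def using sum_upd[OF i, of "\<lambda>_. x" xb] by (simp add: algebra_simps)
  define v where "v = clip k (((\<alpha>-c)/\<beta> - sum xv {..<M})/(real N + 1))"
  have sy: "(\<Sum>j<N. spot_y \<alpha> \<beta> c k M N (\<lambda>_. 0) xv j) = real N * v"
    unfolding spot_y_eq[OF b k] v_def by simp
  have "psi \<alpha> \<beta> C c k M N i xb x (\<lambda>_. 0) = (invdem \<alpha> \<beta> (sum xv {..<M} + real N * v) - C) * xb"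
    unfolding psi_def leader_payoff_def xv_def[symmetric] sy by (simp add: xv_def)
  also have "\<dots> = \<beta> * G N k ((\<alpha>-C)/\<beta> - (real M - 1) * x) xb"
    unfolding G_def invdem_def v_def sx cC using b
    by (simp add: field_simps)
  finally show ?thesis .
qed




definition Gs :: "real \<Rightarrow> real \<Rightarrow> real \<Rightarrow> real \<Rightarrow> real" where
  "Gs s k b z = z * ((b - z) - (s * s - 1) * clip k ((b - z)/(s * s)))"

definition V :: "real \<Rightarrow> real \<Rightarrow> real \<Rightarrow> real" where
  "V s k b = (if b \<le> 0 then 0 else if b \<le> k * s * (s+1) then b * b/(4 * (s * s)) else (b - (s * s-1) * k) * (b - (s * s-1) * k)/4)"

definition cand :: "real \<Rightarrow> real \<Rightarrow> real \<Rightarrow> real \<Rightarrow> bool" where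
  "cand s k b z \<longleftrightarrow> (b \<le> 0 \<and> z = 0) \<or> (0 < b \<and> b \<le> k * s * (s+1) \<and> z = b/2) \<or>
     (k * s * (s+1) \<le> b \<and> z = (b - (s * s-1) * k)/2)"

lemma sq_less: "(x::real) < y \<Longrightarrow> -y < x \<Longrightarrow> x * x < y * y"
proof -
  assume a: "x < y" "-y < x"
  have "0 < (y - x) * (y + x)" using a by (intro mult_pos_pos) auto
  then show ?thesis by (simp add: algebra_simps)
qed

lemma amgm4: "4 * (z * t) \<le> (z+t) * ((z::real)+t)"
proof -
  have "0 \<le> (z-t) * (z-t)" by simp
  then show ?thesis by (simp add: algebra_simps)
qed

lemma amgm4_eq: "4 * (z * t) = (z+t) * ((z::real)+t) \<Longrightarrow> z = t"
proof -
  assume "4 * (z * t) = (z+t) * ((z::real)+t)"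
  then have "(z-t) * (z-t) = 0" by (simp add: algebra_simps)
  then show "z = t" by simp
qed

lemma V_hi:
  assumes s: "s > 1" and k: "k > 0" and b: "k * s * (s+1) \<le> b"
  shows "V s k b = (b - (s * s-1) * k) * (b - (s * s-1) * k)/4"
proof (cases "b = k * s * (s+1)")
  case True
  have "b - (s * s-1) * k = b/s" using True s by (simp add: field_simps)
  moreover have "b > 0" using True s k by simp
  ultimately show ?thesis unfolding V_def using True s by (simp add: field_simps)
next
  case False
  then have "b > k * s * (s+1)" using b by simp
  moreover have "k * s * (s+1) > 0" using s k by simp
  ultimately show ?thesis unfolding V_def by simp
qed

lemma V_nonneg: "V s k b \<ge> 0"
  unfolding V_def by auto

lemma G_main:
  assumes s: "s > 1" and k: "k > 0" and z: "z \<ge> 0"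
  shows "Gs s k b z \<le> V s k b \<and> (Gs s k b z = V s k b \<longrightarrow> cand s k b z)"
proof -
  define t where "t = b - z"
  have bzt: "b = z + t" unfolding t_def by simp
  have ss: "s * s > 1" using s by (metis less_1_mult)
  have sspos: "s * s > 0" using ss by simp
  have s0: "s \<noteq> 0" using s by simp
  define K1 where "K1 = k * s * (s+1)"
  define Nk where "Nk = (s * s-1) * k"
  have K1pos: "K1 > 0" unfolding K1_def using s k by simp
  have K1Nk: "K1 - Nk = k * (s+1)" unfolding K1_def Nk_def by (simp add: algebra_simps)
  consider "t \<le> 0" | "0 \<le> t \<and> t \<le> s * s * k" | "t \<ge> s * s * k" by linarith
  then show ?thesis
  proof cases
    case 1
    have "t/(s * s) \<le> 0" using 1 sspos by (simp add: divide_nonpos_pos)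
    then have "clip k (t/(s * s)) = 0" unfolding clip_def using k by simp
    then have G: "Gs s k b z = z * t" unfolding Gs_def t_def by simp
    have "z * t \<le> 0" using z 1 by (simp add: mult_nonneg_nonpos)
    then have le: "Gs s k b z \<le> V s k b" using G V_nonneg[of s k b] by linarith
    have "cand s k b z" if eq: "Gs s k b z = V s k b"
    proof (cases "b \<le> 0")
      case True
      then have "V s k b = 0" unfolding V_def by simp
      then have "z * t = 0" using eq G by simp
      then have "z = 0 \<or> t = 0" by simp
      then have "z = 0" using True z bzt by auto
      then show ?thesis unfolding cand_def using True by simp
    next
      case False
      have "V s k b > 0"
      proof (cases "b \<le> K1")
        case True then show ?thesis unfolding V_def K1_def[symmetric] using False sspos by simp
      next
        case F2: False
        then have "b - (s * s-1) * k \<noteq> 0" using K1Nk unfolding Nk_def using k s by (smt (verit) mult_pos_pos)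
        then show ?thesis unfolding V_def K1_def[symmetric] using False F2
          by (simp add: zero_less_mult_iff) linarith
      qed
      then show ?thesis using eq G \<open>z * t \<le> 0\<close> by simp
    qed
    then show ?thesis using le by blast
  next
    case 2
    have "t/(s * s) \<le> k" using 2 sspos by (simp add: field_simps)
    moreover have "t/(s * s) \<ge> 0" using 2 sspos by simp
    ultimately have "clip k (t/(s * s)) = t/(s * s)" unfolding clip_def by simp
    then have G: "Gs s k b z = z * t/(s * s)" unfolding Gs_def t_def[symmetric] using sspos s0
      by (simp add: field_simps)
    have bnn: "b \<ge> 0" using z 2 bzt by simp
    have G1: "Gs s k b z \<le> b * b/(4 * (s * s))"
    proof -
      have "(4 * (z * t))/(4 * (s * s)) \<le> ((z+t) * (z+t))/(4 * (s * s))"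
        using amgm4[of z t] sspos by (intro divide_right_mono) auto
      then show ?thesis using G bzt s0 by simp
    qed
    show ?thesis
    proof (cases "b \<le> 0")
      case True
      then have "z = 0" "t = 0" using z 2 bzt by auto
      then show ?thesis unfolding V_def cand_def G using True by simp
    next
      case False
      show ?thesis
      proof (cases "b \<le> K1")
        case True
        then have V: "V s k b = b * b/(4 * (s * s))" unfolding V_def K1_def[symmetric] using False by simp
        have "cand s k b z" if eq: "Gs s k b z = V s k b"
        proof -
          have "z * t/(s * s) = (z+t) * (z+t)/(4 * (s * s))" using eq V G bzt by simp
          then have "4 * (z * t) = (z+t) * (z+t)" using s0 by (simp add: field_simps)
          then have "z = t" by (rule amgm4_eq)
          then have "z = b/2" using bzt by simp
          then show ?thesis unfolding cand_def K1_def[symmetric] using False True by simp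
        qed
        then show ?thesis using G1 V by simp
      next
        case F2: False
        have V: "V s k b = (b - Nk) * (b - Nk)/4" unfolding Nk_def using V_hi[OF s k] F2 K1_def by simp
        have "b * (s-1) > K1 * (s-1)" using F2 s by (intro mult_strict_right_mono) auto
        moreover have "K1 * (s-1) = s * Nk" unfolding K1_def Nk_def by (simp add: algebra_simps)
        ultimately have "b * (s-1) > s * Nk" by simp
        then have "b/s < b - Nk" using s by (simp add: field_simps)
        moreover have "b/s > 0" using False s by simp
        ultimately have "(b/s) * (b/s) < (b-Nk) * (b-Nk)" by (intro sq_less) auto
        then have "b * b/(4 * (s * s)) < (b-Nk) * (b-Nk)/4" using sspos s0 by (simp add: field_simps)
        then show ?thesis using G1 V by simp
      qed
    qed
  next
    case 3
    have "t/(s * s) \<ge> k" using 3 sspos by (simp add: field_simps)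
    then have "clip k (t/(s * s)) = k" unfolding clip_def using k by simp
    then have G: "Gs s k b z = z * (t - Nk)" unfolding Gs_def t_def[symmetric] Nk_def
      by (simp add: algebra_simps)
    have G1: "4 * Gs s k b z \<le> (b - Nk) * (b - Nk)"
      unfolding G using amgm4[of z "t - Nk"] bzt by (simp add: algebra_simps)
    have bpos: "b \<ge> s * s * k" using 3 z bzt by simp
    show ?thesis
    proof (cases "K1 \<le> b")
      case True
      have V: "V s k b = (b - Nk) * (b - Nk)/4" unfolding Nk_def using V_hi[OF s k] True K1_def by simp
      have "cand s k b z" if eq: "Gs s k b z = V s k b"
      proof -
        have "z * (t-Nk) = (b - Nk) * (b - Nk)/4" using eq V G by simp
        then have "4 * (z * (t-Nk)) = (z+(t-Nk)) * (z+(t-Nk))" using bzt by (simp add: algebra_simps)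
        then have "z = t - Nk" by (rule amgm4_eq)
        then have "z = (b - Nk)/2" using bzt by simp
        then show ?thesis unfolding cand_def K1_def[symmetric] Nk_def[symmetric] using True by simp
      qed
      then show ?thesis using G1 V by simp
    next
      case False
      have b0: "b > 0" using bpos s k sspos by (smt (verit) mult_pos_pos)
      have V: "V s k b = b * b/(4 * (s * s))" unfolding V_def K1_def[symmetric] using False b0 by simp
      have "b * (s-1) < K1 * (s-1)" using False s by (intro mult_strict_right_mono) auto
      then have "s * (b - Nk) < b" unfolding K1_def Nk_def by (simp add: algebra_simps)
      moreover have "b * (s+1) > s * (s-1) * k * (s+1)"
      proof -
        have "s * (s-1) * k < s * s * k" using s k by simp
        then have "s * (s-1) * k < b" using bpos by simp
        then show ?thesis using s by (intro mult_strict_right_mono) auto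
      qed
      then have "-b < s * (b - Nk)" unfolding Nk_def by (simp add: algebra_simps)
      ultimately have "(s * (b-Nk)) * (s * (b-Nk)) < b * b" by (intro sq_less)
      then have "(b-Nk) * (b-Nk)/4 < b * b/(4 * (s * s))" using sspos s0 by (simp add: field_simps)
      then show ?thesis using G1 V by simp
    qed
  qed
qed


lemma cand_G:
  assumes s: "s > 1" and k: "k > 0" and c: "cand s k b z"
  shows "z \<ge> 0 \<and> Gs s k b z = V s k b"
proof -
  have ss: "s * s > 1" using s by (metis less_1_mult)
  have sspos: "s * s > 0" using ss by simp
  have s0: "s \<noteq> 0" using s by simp
  consider "b \<le> 0 \<and> z = 0" | "0 < b \<and> b \<le> k * s * (s+1) \<and> z = b/2"
    | "k * s * (s+1) \<le> b \<and> z = (b - (s * s-1) * k)/2" using c unfolding cand_def by blast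
  then show ?thesis
  proof cases
    case 1 then show ?thesis unfolding Gs_def V_def by simp
  next
    case 2
    have "k * s * (s+1) \<le> k * s * (2 * s)" using s k by (intro mult_left_mono) auto
    then have "b/2 \<le> s * s * k" using 2 by (simp add: algebra_simps)
    then have "(b/2)/(s * s) \<le> k" using sspos by (simp add: field_simps)
    moreover have "(b/2)/(s * s) \<ge> 0" using 2 sspos by simp
    moreover have bz: "b - z = b/2" using 2 by simp
    ultimately have cl: "clip k ((b - z)/(s * s)) = (b/2)/(s * s)" unfolding clip_def bz by linarith
    have "Gs s k b z = b * b/(4 * (s * s))" unfolding Gs_def cl using 2 s0 by (simp add: field_simps)
    moreover have "V s k b = b * b/(4 * (s * s))" unfolding V_def using 2 by simp
    moreover have zb: "z = b/2" using 2 by simp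
    moreover have "z \<ge> 0" using 2 by simp
    ultimately show ?thesis by (simp only:)
  next
    case 3
    define Nk where "Nk = (s * s - 1) * k"
    have "s * k \<ge> k" using s k by simp
    then have "b \<ge> (s * s + 1) * k" using 3 by (simp add: algebra_simps)
    then have "(b - z) \<ge> s * s * k" using 3 by (simp add: algebra_simps)
    then have "(b - z)/(s * s) \<ge> k" using sspos by (simp add: field_simps)
    then have cl: "clip k ((b - z)/(s * s)) = k" unfolding clip_def using k by simp
    have zb: "z = (b - Nk)/2" using 3 unfolding Nk_def by simp
    have "Gs s k b z = z * ((b - z) - Nk)" unfolding Gs_def cl Nk_def by simp
    also have "\<dots> = (b - Nk) * (b - Nk)/4" unfolding zb by (simp add: field_simps)
    finally have "Gs s k b z = (b - Nk) * (b - Nk)/4" .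
    moreover have "V s k b = (b - Nk) * (b - Nk)/4" unfolding Nk_def using V_hi[OF s k] 3 by simp
    moreover have "z \<ge> 0"
    proof -
      have "b - Nk \<ge> k * (s+1)" using 3 unfolding Nk_def by (simp add: algebra_simps)
      moreover have "k * (s+1) > 0" using s k by simp
      ultimately show ?thesis using zb by simp
    qed
    ultimately show ?thesis by simp
  qed
qed

lemma BR:
  assumes s: "s > 1" and k: "k > 0" and z: "z \<ge> 0"
  shows "(\<forall>w\<ge>0. Gs s k b w \<le> Gs s k b z) \<longleftrightarrow> cand s k b z"
proof
  assume h: "\<forall>w\<ge>0. Gs s k b w \<le> Gs s k b z"
  define z0 where "z0 = (if b \<le> 0 then 0 else if b \<le> k * s * (s+1) then b/2 else (b - (s * s-1) * k)/2)"
  have c0: "cand s k b z0"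
  proof (cases "b \<le> 0")
    case True then show ?thesis unfolding cand_def z0_def by simp
  next
    case False
    show ?thesis
    proof (cases "b \<le> k * s * (s+1)")
      case True then show ?thesis unfolding cand_def z0_def using False by simp
    next
      case F2: False then show ?thesis unfolding cand_def z0_def using False by simp
    qed
  qed
  have "z0 \<ge> 0 \<and> Gs s k b z0 = V s k b" using cand_G[OF s k c0] .
  then have "Gs s k b z \<ge> V s k b" using h by auto
  moreover have "Gs s k b z \<le> V s k b \<and> (Gs s k b z = V s k b \<longrightarrow> cand s k b z)" using G_main[OF s k z] .
  ultimately show "cand s k b z" by simp
next
  assume c: "cand s k b z"
  have e: "Gs s k b z = V s k b" using cand_G[OF s k c] by simp
  show "\<forall>w\<ge>0. Gs s k b w \<le> Gs s k b z"
  proof (intro allI impI)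
    fix w :: real assume "w \<ge> 0"
    then show "Gs s k b w \<le> Gs s k b z" using G_main[OF s k, of w b] e by simp
  qed
qed




lemma G_Gs:
  assumes "s = sqrt (real N + 1)"
  shows "G N k b z = Gs s k b z"
proof -
  have "s * s = real N + 1" using assms by (simp add: real_sqrt_mult[symmetric])
  then show ?thesis unfolding G_def Gs_def by simp
qed

lemma X0_iff_BR:
  assumes M: "M \<ge> 1" and b: "\<beta> > 0" and k: "k > 0" and cC: "c = C"
  shows "x \<in> X0 \<alpha> \<beta> C c k M N \<longleftrightarrow>
     0 \<le> x \<and> (\<forall>xb\<ge>0. G N k ((\<alpha>-C)/\<beta> - (real M - 1) * x) xb \<le> G N k ((\<alpha>-C)/\<beta> - (real M - 1) * x) x)"
proof -
  define B where "B = (\<alpha>-C)/\<beta> - (real M - 1) * x"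
  have p: "psi \<alpha> \<beta> C c k M N i xb x (\<lambda>_. 0) = \<beta> * G N k B xb" if "i < M" for i xb
    using psi_eq[OF b k cC that] B_def by simp
  have "(\<forall>i<M. \<forall>xbar\<ge>0. psi \<alpha> \<beta> C c k M N i x x (\<lambda>_. 0) \<ge> psi \<alpha> \<beta> C c k M N i xbar x (\<lambda>_. 0))
     \<longleftrightarrow> (\<forall>xb\<ge>0. G N k B xb \<le> G N k B x)"
  proof
    assume h: "\<forall>i<M. \<forall>xbar\<ge>0. psi \<alpha> \<beta> C c k M N i x x (\<lambda>_. 0) \<ge> psi \<alpha> \<beta> C c k M N i xbar x (\<lambda>_. 0)"
    show "\<forall>xb\<ge>0. G N k B xb \<le> G N k B x"
    proof (intro allI impI)
      fix xb :: real assume "xb \<ge> 0"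
      then have "\<beta> * G N k B xb \<le> \<beta> * G N k B x" using h p M by (metis One_nat_def le_eq_less_or_eq less_one not_less_zero)
      then show "G N k B xb \<le> G N k B x" using b by simp
    qed
  next
    assume h: "\<forall>xb\<ge>0. G N k B xb \<le> G N k B x"
    show "\<forall>i<M. \<forall>xbar\<ge>0. psi \<alpha> \<beta> C c k M N i x x (\<lambda>_. 0) \<ge> psi \<alpha> \<beta> C c k M N i xbar x (\<lambda>_. 0)"
      using h p b by (simp add: mult_left_mono)
  qed
  then show ?thesis unfolding X0_def B_def by simp
qed

lemma X0_char:
  assumes M: "M \<ge> 1" and b: "\<beta> > 0" and k: "k > 0" and cC: "c = C" and N: "N \<ge> 1"
    and s: "s = sqrt (real N + 1)" and a: "a = (\<alpha>-C)/\<beta>" and m: "m = real M + 1"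
  shows "x \<in> X0 \<alpha> \<beta> C c k M N \<longleftrightarrow>
     (a \<le> 0 \<and> x = 0) \<or> (0 < a \<and> a \<le> m * (k * s * (s+1))/2 \<and> x = a/m) \<or>
     (real N * k + m * k * (s+1)/2 \<le> a \<and> x = (a - real N * k)/m)"
proof -
  have s1: "s > 1" using s N by simp
  have ss: "s * s = real N + 1" using s by (simp add: real_sqrt_mult[symmetric])
  have mpos: "m > 0" using m by simp
  define B where "B = a - (real M - 1) * x"
  have "x \<in> X0 \<alpha> \<beta> C c k M N \<longleftrightarrow> 0 \<le> x \<and> cand s k B x"
    unfolding X0_iff_BR[OF M b k cC] a[symmetric] B_def[symmetric] G_Gs[OF s]
    using BR[OF s1 k] by blast
  also have "\<dots> \<longleftrightarrow> (a \<le> 0 \<and> x = 0) \<or> (0 < a \<and> a \<le> m * (k * s * (s+1))/2 \<and> x = a/m) \<or>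
     (real N * k + m * k * (s+1)/2 \<le> a \<and> x = (a - real N * k)/m)"
  proof -
    have Nk: "(s * s - 1) * k = real N * k" using ss by simp
    have c1: "(B \<le> 0 \<and> x = 0) \<longleftrightarrow> (a \<le> 0 \<and> x = 0)" unfolding B_def by auto
    have c2: "(0 < B \<and> B \<le> k * s * (s+1) \<and> x = B/2) \<longleftrightarrow> (0 < a \<and> a \<le> m * (k * s * (s+1))/2 \<and> x = a/m)"
    proof
      assume h: "0 < B \<and> B \<le> k * s * (s+1) \<and> x = B/2"
      then have "2 * x = a - (real M - 1) * x" unfolding B_def by simp
      then have "m * x = a" unfolding m by (simp add: algebra_simps)
      then have xa: "x = a/m" using mpos by (simp add: field_simps)
      have "B = 2 * x" using h by simp
      then have "B = 2 * a / m" using xa by simp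
      then have aB: "a = B * m / 2" using mpos by (simp add: field_simps)
      have "0 < B * m" using h mpos by simp
      moreover have "B * m \<le> (k * s * (s+1)) * m" using h mpos by (intro mult_right_mono) auto
      moreover have "(k * s * (s+1)) * m = m * (k * s * (s+1))" by simp
      ultimately show "0 < a \<and> a \<le> m * (k * s * (s+1))/2 \<and> x = a/m" using aB xa by simp
    next
      assume h: "0 < a \<and> a \<le> m * (k * s * (s+1))/2 \<and> x = a/m"
      have mx: "(real M + 1) * x = a" using h mpos m by simp
      have "B = (real M + 1) * x - (real M - 1) * x" unfolding B_def using mx by simp
      also have "\<dots> = 2 * x" by (simp add: algebra_simps)
      finally have B2: "B = 2 * x" .
      have "x \<le> (k * s * (s+1))/2"
      proof -
        have "x * m \<le> ((k * s * (s+1))/2) * m" using h mpos by (simp add: mult.commute)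
        then show ?thesis using mpos by (simp add: mult_le_cancel_right)
      qed
      moreover have "x > 0" using h mpos by simp
      ultimately show "0 < B \<and> B \<le> k * s * (s+1) \<and> x = B/2" using B2 by simp
    qed
    have c3: "(k * s * (s+1) \<le> B \<and> x = (B - (s * s-1) * k)/2) \<longleftrightarrow>
       (real N * k + m * k * (s+1)/2 \<le> a \<and> x = (a - real N * k)/m)"
      unfolding Nk
    proof
      assume h: "k * s * (s+1) \<le> B \<and> x = (B - real N * k)/2"
      then have "2 * x = a - (real M - 1) * x - real N * k" unfolding B_def by simp
      then have "m * x = a - real N * k" unfolding m by (simp add: algebra_simps)
      then have xa: "x = (a - real N * k)/m" using mpos by (simp add: field_simps)
      have "k * s * (s+1) \<le> 2 * x + real N * k" using h by simp
      then have "k * (s+1) \<le> 2 * x" using ss by (simp add: algebra_simps)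
      then have "k * (s+1) \<le> 2 * ((a - real N * k)/m)" using xa by simp
      then have "m * k * (s+1)/2 \<le> a - real N * k" using mpos by (simp add: field_simps)
      then show "real N * k + m * k * (s+1)/2 \<le> a \<and> x = (a - real N * k)/m" using xa by simp
    next
      assume h: "real N * k + m * k * (s+1)/2 \<le> a \<and> x = (a - real N * k)/m"
      then have "m * x = a - real N * k" using mpos by simp
      then have "2 * x = a - (real M - 1) * x - real N * k" unfolding m by (simp add: algebra_simps)
      then have Bx: "B = 2 * x + real N * k" unfolding B_def by simp
      have "m * (k * (s+1)/2) \<le> m * x" using h \<open>m * x = a - real N * k\<close> by simp
      then have "k * (s+1)/2 \<le> x" using mpos by (simp only: mult_le_cancel_left_pos)
      then have "k * s * (s+1) \<le> B" unfolding Bx using ss by (simp add: algebra_simps)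
      then show "k * s * (s+1) \<le> B \<and> x = (B - real N * k)/2" using Bx by simp
    qed
    have xnn: "0 \<le> x" if "(a \<le> 0 \<and> x = 0) \<or> (0 < a \<and> a \<le> m * (k * s * (s+1))/2 \<and> x = a/m) \<or>
     (real N * k + m * k * (s+1)/2 \<le> a \<and> x = (a - real N * k)/m)"
    proof -
      have "m * k * (s+1)/2 \<ge> 0" using mpos k s1 by simp
      then show ?thesis using that mpos by auto
    qed
    show ?thesis unfolding cand_def using c1 c2 c3 xnn by blast
  qed
  finally show ?thesis .
qed


lemma ysym_eq:
  assumes b: "\<beta> > 0" and k: "k > 0" and cC: "c = C" and j: "j < N"
  shows "y_sym \<alpha> \<beta> c k M N x j = clip k (((\<alpha>-C)/\<beta> - real M * x)/(real N + 1))"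
  unfolding y_sym_def spot_y_eq[OF b k] using j cC by simp

lemma master:
  assumes M: "M \<ge> 1" and b: "\<beta> > 0" and k: "k > 0" and cC: "c = C" and N: "N \<ge> 1"
    and s: "s = sqrt (real N + 1)" and a: "a = (\<alpha>-C)/\<beta>" and m: "m = real M + 1"
  shows "(\<exists>x\<in>X0 \<alpha> \<beta> C c k M N. P (clip k ((a - real M * x)/(real N + 1)))) \<longleftrightarrow>
     (a \<le> 0 \<and> P 0) \<or> (0 < a \<and> a \<le> m * (k * s * (s+1))/2 \<and> P (a/(m * (real N + 1)))) \<or>
     (real N * k + m * k * (s+1)/2 \<le> a \<and> P k)"
proof -
  have s1: "s > 1" using s N by simp
  have ss: "s * s = real N + 1" using s by (simp add: real_sqrt_mult[symmetric])
  have mpos: "m > 0" using m by simp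
  have npos: "real N + 1 > 0" by simp
  have v1: "clip k ((a - real M * 0)/(real N + 1)) = 0" if "a \<le> 0"
  proof -
    have "a/(real N + 1) \<le> 0" using that npos by (simp add: divide_nonpos_pos)
    then show ?thesis unfolding clip_def using k by simp
  qed
  have v2: "clip k ((a - real M * (a/m))/(real N + 1)) = a/(m * (real N + 1))"
    if h: "0 < a" "a \<le> m * (k * s * (s+1))/2"
  proof -
    have e: "(a - real M * (a/m))/(real N + 1) = a/(m * (real N + 1))"
      using mpos npos unfolding m by (simp add: field_simps)
    have "a/(m * (real N + 1)) \<le> (m * (k * s * (s+1))/2)/(m * (real N + 1))"
      using h mpos npos by (intro divide_right_mono) auto
    also have "\<dots> = k * (s+1)/(2 * s)" using mpos s1 ss[symmetric] by (simp add: field_simps)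
    also have "\<dots> \<le> k" using s1 k by (simp add: field_simps)
    finally have "a/(m * (real N + 1)) \<le> k" .
    moreover have "a/(m * (real N + 1)) \<ge> 0" using h mpos by simp
    ultimately show ?thesis unfolding e clip_def by simp
  qed
  have v3: "clip k ((a - real M * ((a - real N * k)/m))/(real N + 1)) = k"
    if h: "real N * k + m * k * (s+1)/2 \<le> a"
  proof -
    have "m * k * 2 \<le> m * k * (s+1)" using s1 k mpos by simp
    then have "real N * k + m * k \<le> a" using h by simp
    then have "(real N + 1) * m * k \<le> a + real M * real N * k" unfolding m by (simp add: algebra_simps)
    moreover have e: "(a - real M * ((a - real N * k)/m))/(real N + 1) = (a + real M * real N * k)/((real N + 1) * m)"
      using mpos npos unfolding m by (simp add: field_simps)
    have D: "(real N + 1) * m > 0" using mpos npos by simp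
    have "k \<le> (a + real M * real N * k)/((real N + 1) * m) \<longleftrightarrow> k * ((real N + 1) * m) \<le> a + real M * real N * k"
      by (rule pos_le_divide_eq[OF D])
    moreover have "k * ((real N + 1) * m) = (real N + 1) * m * k" by simp
    ultimately have "(a - real M * ((a - real N * k)/m))/(real N + 1) \<ge> k"
      unfolding e using \<open>(real N + 1) * m * k \<le> a + real M * real N * k\<close> by simp
    then show ?thesis unfolding clip_def using k by simp
  qed
  show ?thesis
  proof
    assume "\<exists>x\<in>X0 \<alpha> \<beta> C c k M N. P (clip k ((a - real M * x)/(real N + 1)))"
    then obtain x where x: "x \<in> X0 \<alpha> \<beta> C c k M N" and P: "P (clip k ((a - real M * x)/(real N + 1)))" by blast
    from x[unfolded X0_char[OF M b k cC N s a m]]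
    show "(a \<le> 0 \<and> P 0) \<or> (0 < a \<and> a \<le> m * (k * s * (s+1))/2 \<and> P (a/(m * (real N + 1)))) \<or>
     (real N * k + m * k * (s+1)/2 \<le> a \<and> P k)"
      using P v1 v2 v3 by auto
  next
    assume h: "(a \<le> 0 \<and> P 0) \<or> (0 < a \<and> a \<le> m * (k * s * (s+1))/2 \<and> P (a/(m * (real N + 1)))) \<or>
     (real N * k + m * k * (s+1)/2 \<le> a \<and> P k)"
    show "\<exists>x\<in>X0 \<alpha> \<beta> C c k M N. P (clip k ((a - real M * x)/(real N + 1)))"
      using h
    proof (elim disjE conjE)
      assume h1: "a \<le> 0" "P 0"
      have "0 \<in> X0 \<alpha> \<beta> C c k M N" using X0_char[OF M b k cC N s a m, of 0] h1 by simp
      then show ?thesis using v1[OF h1(1)] h1 by (intro bexI[where x=0]) simp_all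
    next
      assume h1: "0 < a" "a \<le> m * (k * s * (s+1))/2" "P (a/(m * (real N + 1)))"
      have "a/m \<in> X0 \<alpha> \<beta> C c k M N" using X0_char[OF M b k cC N s a m, of "a/m"] h1 by simp
      then show ?thesis using v2[OF h1(1,2)] h1 by (intro bexI[where x="a/m"]) simp_all
    next
      assume h1: "real N * k + m * k * (s+1)/2 \<le> a" "P k"
      have "(a - real N * k)/m \<in> X0 \<alpha> \<beta> C c k M N" using X0_char[OF M b k cC N s a m, of "(a - real N * k)/m"] h1 by simp
      then show ?thesis using v3[OF h1(1)] h1 by (intro bexI[where x="(a - real N * k)/m"]) simp_all
    qed
  qed
qed




lemma key:
  assumes M: "M \<ge> 1" and b: "\<beta> > 0" and k: "k > 0" and cC: "c = C" and N: "N \<ge> 1"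
    and s: "s = sqrt (real N + 1)" and m: "m = real M + 1"
  shows "(\<exists>x\<in>X0 \<alpha> \<beta> C c k M N. \<forall>j<N. P (y_sym \<alpha> \<beta> c k M N x j)) \<longleftrightarrow>
     ((\<alpha>-C)/\<beta> \<le> 0 \<and> P 0) \<or> (0 < (\<alpha>-C)/\<beta> \<and> (\<alpha>-C)/\<beta> \<le> m * (k * s * (s+1))/2 \<and> P (((\<alpha>-C)/\<beta>)/(m * (real N + 1)))) \<or>
     (real N * k + m * k * (s+1)/2 \<le> (\<alpha>-C)/\<beta> \<and> P k)"
proof -
  have "(\<forall>j<N. P (y_sym \<alpha> \<beta> c k M N x j)) \<longleftrightarrow> P (clip k (((\<alpha>-C)/\<beta> - real M * x)/(real N + 1)))" for x
  proof -
    have "0 < N" using N by simp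
    then show ?thesis using ysym_eq[OF b k cC] by auto
  qed
  then have "(\<exists>x\<in>X0 \<alpha> \<beta> C c k M N. \<forall>j<N. P (y_sym \<alpha> \<beta> c k M N x j)) \<longleftrightarrow>
     (\<exists>x\<in>X0 \<alpha> \<beta> C c k M N. P (clip k (((\<alpha>-C)/\<beta> - real M * x)/(real N + 1))))" by simp
  also have "\<dots> \<longleftrightarrow> ((\<alpha>-C)/\<beta> \<le> 0 \<and> P 0) \<or> (0 < (\<alpha>-C)/\<beta> \<and> (\<alpha>-C)/\<beta> \<le> m * (k * s * (s+1))/2 \<and> P (((\<alpha>-C)/\<beta>)/(m * (real N + 1)))) \<or>
     (real N * k + m * k * (s+1)/2 \<le> (\<alpha>-C)/\<beta> \<and> P k)"
    by (rule master[OF M b k cC N s refl m])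
  finally show ?thesis .
qed

lemma landau_part:
  assumes kk: "k \<noteq> 0"
  shows "(\<lambda>N::nat. (k * (sqrt (real N + 1) + 1) / (2 * sqrt (real N + 1))) / (k / 2) - 1) \<in> O(\<lambda>N. 1 / sqrt (real N))"
proof (rule bigoI[where c=1])
  show "eventually (\<lambda>N::nat. norm ((k * (sqrt (real N + 1) + 1) / (2 * sqrt (real N + 1))) / (k / 2) - 1)
      \<le> 1 * norm (1 / sqrt (real N))) at_top"
  proof (rule eventually_mono[OF eventually_ge_at_top[of 1]])
    fix N :: nat assume N: "N \<ge> 1"
    have sp: "sqrt (real N + 1) > 0" by simp
    show "norm ((k * (sqrt (real N + 1) + 1) / (2 * sqrt (real N + 1))) / (k / 2) - 1) \<le> 1 * norm (1 / sqrt (real N))"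
    proof -
      note False = kk
      have "(k * (sqrt (real N + 1) + 1) / (2 * sqrt (real N + 1))) / (k / 2) - 1 = 1 / sqrt (real N + 1)"
        using False sp by (simp add: field_simps)
      moreover have "1 / sqrt (real N + 1) \<le> 1 / sqrt (real N)"
        using N by (intro divide_left_mono) auto
      ultimately show ?thesis using sp by simp
    qed
  qed
qed




theorem lemma7:
  fixes M :: nat and \<beta> C c k :: real
  assumes M: "M \<ge> 1" and \<beta>: "\<beta> > 0" and C: "C > 0" and cC: "c \<ge> C" and k: "k > 0"
    and dC: "deltaC \<beta> C c = 0"
  shows "\<exists>ybar :: nat \<Rightarrow> real.
    (\<forall>N\<ge>2.
       ybar N < k \<and>
       (\<forall>y. 0 \<le> y \<and> y \<le> k \<longrightarrow>
          ((\<exists>\<alpha>>0. \<exists>x\<in>X0 \<alpha> \<beta> C c k M N. \<forall>j<N. y_sym \<alpha> \<beta> c k M N x j = y)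
             \<longleftrightarrow> (y \<le> ybar N \<or> y = k))) \<and>
       (\<forall>y'. y' < k \<and>
          (\<forall>y. 0 \<le> y \<and> y \<le> k \<longrightarrow>
             ((\<exists>\<alpha>>0. \<exists>x\<in>X0 \<alpha> \<beta> C c k M N. \<forall>j<N. y_sym \<alpha> \<beta> c k M N x j = y)
                \<longleftrightarrow> (y \<le> y' \<or> y = k)))
          \<longrightarrow> y' = ybar N) \<and>
       (\<exists>!abar. abar \<ge> 0 \<and>
          (\<forall>\<alpha>>0. alpha_x \<alpha> \<beta> C \<le> abar \<longleftrightarrow>
             (\<exists>x\<in>X0 \<alpha> \<beta> C c k M N. \<forall>j<N. y_sym \<alpha> \<beta> c k M N x j \<le> ybar N))) \<and>
       (\<exists>abar alow. abar \<ge> 0 \<and>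
          (\<forall>\<alpha>>0. alpha_x \<alpha> \<beta> C \<le> abar \<longleftrightarrow>
             (\<exists>x\<in>X0 \<alpha> \<beta> C c k M N. \<forall>j<N. y_sym \<alpha> \<beta> c k M N x j \<le> ybar N)) \<and>
          (\<exists>!a. a \<le> abar \<and>
             (\<forall>\<alpha>>0. alpha_x \<alpha> \<beta> C \<ge> a \<longleftrightarrow>
                (\<exists>x\<in>X0 \<alpha> \<beta> C c k M N. \<forall>j<N. y_sym \<alpha> \<beta> c k M N x j = k))) \<and>
          alow \<le> abar \<and>
          (\<forall>\<alpha>>0. alpha_x \<alpha> \<beta> C \<ge> alow \<longleftrightarrow>
             (\<exists>x\<in>X0 \<alpha> \<beta> C c k M N. \<forall>j<N. y_sym \<alpha> \<beta> c k M N x j = k)) \<and>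
          (\<forall>\<alpha>>0. alow \<le> alpha_x \<alpha> \<beta> C \<and> alpha_x \<alpha> \<beta> C \<le> abar \<longrightarrow>
             card (X0 \<alpha> \<beta> C c k M N) = 2))) \<and>
    (\<lambda>N. ybar N / (k / 2) - 1) \<in> O(\<lambda>N. 1 / sqrt (real N))"
proof -
  have cC: "c = C" using dC \<beta> unfolding deltaC_def by simp
  define ybar :: "nat \<Rightarrow> real" where "ybar N = k * (sqrt (real N + 1) + 1) / (2 * sqrt (real N + 1))" for N
  have main: "ybar N < k \<and>
       (\<forall>y. 0 \<le> y \<and> y \<le> k \<longrightarrow>
          ((\<exists>\<alpha>>0. \<exists>x\<in>X0 \<alpha> \<beta> C c k M N. \<forall>j<N. y_sym \<alpha> \<beta> c k M N x j = y)
             \<longleftrightarrow> (y \<le> ybar N \<or> y = k))) \<and>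
       (\<forall>y'. y' < k \<and>
          (\<forall>y. 0 \<le> y \<and> y \<le> k \<longrightarrow>
             ((\<exists>\<alpha>>0. \<exists>x\<in>X0 \<alpha> \<beta> C c k M N. \<forall>j<N. y_sym \<alpha> \<beta> c k M N x j = y)
                \<longleftrightarrow> (y \<le> y' \<or> y = k)))
          \<longrightarrow> y' = ybar N) \<and>
       (\<exists>!abar. abar \<ge> 0 \<and>
          (\<forall>\<alpha>>0. alpha_x \<alpha> \<beta> C \<le> abar \<longleftrightarrow>
             (\<exists>x\<in>X0 \<alpha> \<beta> C c k M N. \<forall>j<N. y_sym \<alpha> \<beta> c k M N x j \<le> ybar N))) \<and>
       (\<exists>abar alow. abar \<ge> 0 \<and>
          (\<forall>\<alpha>>0. alpha_x \<alpha> \<beta> C \<le> abar \<longleftrightarrow>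
             (\<exists>x\<in>X0 \<alpha> \<beta> C c k M N. \<forall>j<N. y_sym \<alpha> \<beta> c k M N x j \<le> ybar N)) \<and>
          (\<exists>!a. a \<le> abar \<and>
             (\<forall>\<alpha>>0. alpha_x \<alpha> \<beta> C \<ge> a \<longleftrightarrow>
                (\<exists>x\<in>X0 \<alpha> \<beta> C c k M N. \<forall>j<N. y_sym \<alpha> \<beta> c k M N x j = k))) \<and>
          alow \<le> abar \<and>
          (\<forall>\<alpha>>0. alpha_x \<alpha> \<beta> C \<ge> alow \<longleftrightarrow>
             (\<exists>x\<in>X0 \<alpha> \<beta> C c k M N. \<forall>j<N. y_sym \<alpha> \<beta> c k M N x j = k)) \<and>
          (\<forall>\<alpha>>0. alow \<le> alpha_x \<alpha> \<beta> C \<and> alpha_x \<alpha> \<beta> C \<le> abar \<longrightarrow>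
             card (X0 \<alpha> \<beta> C c k M N) = 2))" if N2: "N \<ge> 2" for N
  proof -
    have N: "N \<ge> 1" using N2 by simp
    define s where "s = sqrt (real N + 1)"
    define m where "m = real M + 1"
    define abar where "abar = m * (k * s * (s+1))/2"
    define alow where "alow = real N * k + m * k * (s+1)/2"
    have s1: "s > 1" using N unfolding s_def by simp
    have ss: "s * s = real N + 1" unfolding s_def by (simp add: real_sqrt_mult[symmetric])
    have mpos: "m \<ge> 2" using M unfolding m_def by simp
    have npos: "real N + 1 > 0" by simp
    have yb: "ybar N = k * (s+1)/(2 * s)" unfolding ybar_def s_def by simp
    have ybk: "ybar N < k" unfolding yb using s1 k by (simp add: field_simps)
    have ybpos: "ybar N > 0" unfolding yb using s1 k by simp
    have abar_yb: "abar/(m * (real N + 1)) = ybar N"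
      unfolding yb abar_def ss[symmetric] using mpos s1 by (simp add: field_simps)
    have Ngt: "real N \<ge> 1" using N by simp
    have alow_le: "alow \<le> abar"
    proof -
      have "abar - alow = m * k * ((s+1)*(s-1))/2 - real N * k"
        unfolding abar_def alow_def by (simp add: field_simps)
      also have "(s+1)*(s-1) = real N" using ss by (simp add: algebra_simps)
      finally have "abar - alow = real N * k * (m - 2)/2" by (simp add: algebra_simps)
      moreover have "real N * k * (m - 2) \<ge> 0" using mpos k by simp
      ultimately show ?thesis by simp
    qed
    have alow_pos: "alow > 0" unfolding alow_def using mpos k s1 by (simp add: add_nonneg_pos)
    have abar_pos: "abar > 0" using alow_le alow_pos by simp
    have ax: "alpha_x \<alpha> \<beta> C = (\<alpha>-C)/\<beta>" for \<alpha> unfolding alpha_x_def ..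
    have mk: "C + \<beta> * t > 0 \<and> (C + \<beta> * t - C)/\<beta> = t" if "t \<ge> 0" for t
    proof -
      have "\<beta> * t \<ge> 0" using that \<beta> by simp
      then show ?thesis using C \<beta> by simp
    qed
    note K = key[OF M \<beta> k cC N s_def m_def, folded abar_def alow_def]
    have intv: "0 < t/(m * (real N + 1)) \<and> t/(m * (real N + 1)) \<le> ybar N" if "0 < t" "t \<le> abar" for t
    proof -
      have "t/(m * (real N + 1)) \<le> abar/(m * (real N + 1))" using that mpos by (intro divide_right_mono) auto
      then show ?thesis using abar_yb that mpos by simp
    qed
    have P1: "(\<exists>\<alpha>>0. \<exists>x\<in>X0 \<alpha> \<beta> C c k M N. \<forall>j<N. y_sym \<alpha> \<beta> c k M N x j = y)
             \<longleftrightarrow> (y \<le> ybar N \<or> y = k)" if y: "0 \<le> y" "y \<le> k" for y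
    proof
      assume "\<exists>\<alpha>>0. \<exists>x\<in>X0 \<alpha> \<beta> C c k M N. \<forall>j<N. y_sym \<alpha> \<beta> c k M N x j = y"
      then obtain \<alpha> where "\<exists>x\<in>X0 \<alpha> \<beta> C c k M N. \<forall>j<N. y_sym \<alpha> \<beta> c k M N x j = y" by blast
      then have "((\<alpha>-C)/\<beta> \<le> 0 \<and> 0 = y) \<or> (0 < (\<alpha>-C)/\<beta> \<and> (\<alpha>-C)/\<beta> \<le> abar \<and> ((\<alpha>-C)/\<beta>)/(m * (real N + 1)) = y) \<or>
          (alow \<le> (\<alpha>-C)/\<beta> \<and> k = y)" using K[where P="\<lambda>v. v = y" and \<alpha>="\<alpha>"] by simp
      then show "y \<le> ybar N \<or> y = k"
      proof (elim disjE conjE)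
        assume "0 = y" then show ?thesis using ybpos by simp
      next
        assume h1: "0 < (\<alpha>-C)/\<beta>" "(\<alpha>-C)/\<beta> \<le> abar" "((\<alpha>-C)/\<beta>)/(m * (real N + 1)) = y"
        have "((\<alpha>-C)/\<beta>)/(m * (real N + 1)) \<le> ybar N" using intv[OF h1(1,2)] by blast
        then show ?thesis using h1(3) by simp
      next
        assume "k = y" then show ?thesis by simp
      qed
    next
      assume h: "y \<le> ybar N \<or> y = k"
      show "\<exists>\<alpha>>0. \<exists>x\<in>X0 \<alpha> \<beta> C c k M N. \<forall>j<N. y_sym \<alpha> \<beta> c k M N x j = y"
      proof (cases "y = k")
        case True
        have "C + \<beta> * alow > 0" "(C + \<beta> * alow - C)/\<beta> = alow" using mk[of alow] alow_pos by auto
        then show ?thesis using K[where P="\<lambda>v. v = y" and \<alpha>="C + \<beta> * alow"] True by auto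
      next
        case False
        then have yl: "y \<le> ybar N" using h by simp
        show ?thesis
        proof (cases "y = 0")
          case True
          have "C + \<beta> * 0 > 0" "(C + \<beta> * 0 - C)/\<beta> = 0" using mk[of 0] by auto
          then show ?thesis using K[where P="\<lambda>v. v = y" and \<alpha>="C + \<beta> * 0"] True by auto
        next
          case F2: False
          define t where "t = y * (m * (real N + 1))"
          have tpos: "t > 0" unfolding t_def using F2 y mpos by simp
          have "t \<le> ybar N * (m * (real N + 1))" unfolding t_def using yl mpos by (intro mult_right_mono) auto
          also have "\<dots> = abar" unfolding abar_yb[symmetric] using mpos by simp
          finally have tab: "t \<le> abar" .
          have ty: "t/(m * (real N + 1)) = y" unfolding t_def using mpos by simp
          have "C + \<beta> * t > 0" "(C + \<beta> * t - C)/\<beta> = t" using mk[of t] tpos by auto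
          then show ?thesis using K[where P="\<lambda>v. v = y" and \<alpha>="C + \<beta> * t"] tpos tab ty by auto
        qed
      qed
    qed
    have U: "y' = ybar N" if h: "y' < k \<and>
          (\<forall>y. 0 \<le> y \<and> y \<le> k \<longrightarrow>
             ((\<exists>\<alpha>>0. \<exists>x\<in>X0 \<alpha> \<beta> C c k M N. \<forall>j<N. y_sym \<alpha> \<beta> c k M N x j = y)
                \<longleftrightarrow> (y \<le> y' \<or> y = k)))" for y'
    proof (rule ccontr)
      assume ne: "y' \<noteq> ybar N"
      show False
      proof (cases "y' < ybar N")
        case True
        have "ybar N \<le> ybar N \<or> ybar N = k" by simp
        then have "ybar N \<le> y' \<or> ybar N = k" using h P1[of "ybar N"] ybpos ybk by auto
        then show False using True ybk by auto
      next
        case False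
        then have "y' > ybar N" using ne by simp
        then have "\<not> (y' \<le> ybar N \<or> y' = k)" using h by auto
        then show False using h P1[of y'] ybpos \<open>y' > ybar N\<close> by auto
      qed
    qed
    have AB: "alpha_x \<alpha> \<beta> C \<le> abar \<longleftrightarrow>
             (\<exists>x\<in>X0 \<alpha> \<beta> C c k M N. \<forall>j<N. y_sym \<alpha> \<beta> c k M N x j \<le> ybar N)" for \<alpha>
    proof -
      have "(\<exists>x\<in>X0 \<alpha> \<beta> C c k M N. \<forall>j<N. y_sym \<alpha> \<beta> c k M N x j \<le> ybar N) \<longleftrightarrow>
        ((\<alpha>-C)/\<beta> \<le> 0 \<and> 0 \<le> ybar N) \<or> (0 < (\<alpha>-C)/\<beta> \<and> (\<alpha>-C)/\<beta> \<le> abar \<and> ((\<alpha>-C)/\<beta>)/(m * (real N + 1)) \<le> ybar N) \<or>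
          (alow \<le> (\<alpha>-C)/\<beta> \<and> k \<le> ybar N)" using K[where P="\<lambda>v. v \<le> ybar N" and \<alpha>="\<alpha>"] by simp
      also have "\<dots> \<longleftrightarrow> (\<alpha>-C)/\<beta> \<le> abar"
      proof -
        have "0 < (\<alpha>-C)/\<beta> \<and> (\<alpha>-C)/\<beta> \<le> abar \<Longrightarrow> ((\<alpha>-C)/\<beta>)/(m * (real N + 1)) \<le> ybar N"
          using intv by blast
        then show ?thesis using ybpos ybk abar_pos by linarith
      qed
      finally show ?thesis unfolding ax by simp
    qed
    have ABU: "\<exists>!abar'. abar' \<ge> 0 \<and>
          (\<forall>\<alpha>>0. alpha_x \<alpha> \<beta> C \<le> abar' \<longleftrightarrow>
             (\<exists>x\<in>X0 \<alpha> \<beta> C c k M N. \<forall>j<N. y_sym \<alpha> \<beta> c k M N x j \<le> ybar N))"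
    proof (rule ex1I[where a=abar])
      show "abar \<ge> 0 \<and> (\<forall>\<alpha>>0. alpha_x \<alpha> \<beta> C \<le> abar \<longleftrightarrow>
             (\<exists>x\<in>X0 \<alpha> \<beta> C c k M N. \<forall>j<N. y_sym \<alpha> \<beta> c k M N x j \<le> ybar N))"
        using AB abar_pos by simp
    next
      fix a' assume h: "a' \<ge> 0 \<and> (\<forall>\<alpha>>0. alpha_x \<alpha> \<beta> C \<le> a' \<longleftrightarrow>
             (\<exists>x\<in>X0 \<alpha> \<beta> C c k M N. \<forall>j<N. y_sym \<alpha> \<beta> c k M N x j \<le> ybar N))"
      then have h2: "\<forall>\<alpha>>0. alpha_x \<alpha> \<beta> C \<le> a' \<longleftrightarrow> alpha_x \<alpha> \<beta> C \<le> abar" using AB by simp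
      have m1: "C + \<beta> * a' > 0" "alpha_x (C + \<beta> * a') \<beta> C = a'" using mk[of "a'"] h unfolding ax by auto
      have m2: "C + \<beta> * abar > 0" "alpha_x (C + \<beta> * abar) \<beta> C = abar" using mk[of abar] abar_pos unfolding ax by auto
      have "a' \<le> abar" using h2 m1 by force
      moreover have "abar \<le> a'" using h2 m2 by force
      ultimately show "a' = abar" by simp
    qed
    have CAP: "alpha_x \<alpha> \<beta> C \<ge> alow \<longleftrightarrow>
             (\<exists>x\<in>X0 \<alpha> \<beta> C c k M N. \<forall>j<N. y_sym \<alpha> \<beta> c k M N x j = k)" for \<alpha>
    proof -
      have "(\<exists>x\<in>X0 \<alpha> \<beta> C c k M N. \<forall>j<N. y_sym \<alpha> \<beta> c k M N x j = k) \<longleftrightarrow>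
        ((\<alpha>-C)/\<beta> \<le> 0 \<and> 0 = k) \<or> (0 < (\<alpha>-C)/\<beta> \<and> (\<alpha>-C)/\<beta> \<le> abar \<and> ((\<alpha>-C)/\<beta>)/(m * (real N + 1)) = k) \<or>
          (alow \<le> (\<alpha>-C)/\<beta> \<and> k = k)" using K[where P="\<lambda>v. v = k" and \<alpha>="\<alpha>"] by simp
      also have "\<dots> \<longleftrightarrow> alow \<le> (\<alpha>-C)/\<beta>"
      proof -
        have "0 < (\<alpha>-C)/\<beta> \<and> (\<alpha>-C)/\<beta> \<le> abar \<Longrightarrow> ((\<alpha>-C)/\<beta>)/(m * (real N + 1)) \<le> ybar N"
          using intv by blast
        then show ?thesis using ybk k by linarith
      qed
      finally show ?thesis unfolding ax by simp
    qed
    have CAPU: "\<exists>!a. a \<le> abar \<and>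
             (\<forall>\<alpha>>0. alpha_x \<alpha> \<beta> C \<ge> a \<longleftrightarrow>
                (\<exists>x\<in>X0 \<alpha> \<beta> C c k M N. \<forall>j<N. y_sym \<alpha> \<beta> c k M N x j = k))"
    proof (rule ex1I[where a=alow])
      show "alow \<le> abar \<and> (\<forall>\<alpha>>0. alpha_x \<alpha> \<beta> C \<ge> alow \<longleftrightarrow>
                (\<exists>x\<in>X0 \<alpha> \<beta> C c k M N. \<forall>j<N. y_sym \<alpha> \<beta> c k M N x j = k))"
        using CAP alow_le by simp
    next
      fix a' assume h: "a' \<le> abar \<and> (\<forall>\<alpha>>0. alpha_x \<alpha> \<beta> C \<ge> a' \<longleftrightarrow>
                (\<exists>x\<in>X0 \<alpha> \<beta> C c k M N. \<forall>j<N. y_sym \<alpha> \<beta> c k M N x j = k))"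
      then have h2: "\<forall>\<alpha>>0. a' \<le> alpha_x \<alpha> \<beta> C \<longleftrightarrow> alow \<le> alpha_x \<alpha> \<beta> C" using CAP by simp
      define t where "t = max a' 0"
      have m1: "C + \<beta> * t > 0" "alpha_x (C + \<beta> * t) \<beta> C = t" using mk[of t] unfolding ax t_def by auto
      have m2: "C + \<beta> * alow > 0" "alpha_x (C + \<beta> * alow) \<beta> C = alow" using mk[of alow] alow_pos unfolding ax by auto
      have "a' \<le> alow" using h2 m2 by force
      moreover have "alow \<le> t" using h2 m1 unfolding t_def by force
      then have "alow \<le> a'" using alow_pos unfolding t_def by simp
      ultimately show "a' = alow" by simp
    qed
    have CARD: "card (X0 \<alpha> \<beta> C c k M N) = 2" if h: "alow \<le> alpha_x \<alpha> \<beta> C \<and> alpha_x \<alpha> \<beta> C \<le> abar" for \<alpha>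
    proof -
      define a where "a = (\<alpha>-C)/\<beta>"
      have ha: "alow \<le> a" "a \<le> abar" using h unfolding ax a_def by auto
      have apos: "a > 0" using ha alow_pos by simp
      have "X0 \<alpha> \<beta> C c k M N = {a/m, (a - real N * k)/m}"
      proof
        show "X0 \<alpha> \<beta> C c k M N \<subseteq> {a/m, (a - real N * k)/m}"
          using X0_char[OF M \<beta> k cC N s_def a_def m_def] apos by auto
        show "{a/m, (a - real N * k)/m} \<subseteq> X0 \<alpha> \<beta> C c k M N"
          using X0_char[OF M \<beta> k cC N s_def a_def m_def] apos ha unfolding abar_def alow_def by auto
      qed
      moreover have "a/m \<noteq> (a - real N * k)/m"
      proof
        assume "a/m = (a - real N * k)/m"
        then have "a = a - real N * k" using mpos by simp
        then show False using Ngt k by simp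
      qed
      ultimately show ?thesis by simp
    qed
    show ?thesis
      apply (intro conjI)
      subgoal by (rule ybk)
      subgoal using P1 by blast
      subgoal using U by blast
      subgoal by (rule ABU)
      subgoal
        apply (rule exI[where x=abar], rule exI[where x=alow])
        using abar_pos AB CAPU alow_le CAP CARD by simp
      done
  qed
  have L: "(\<lambda>N. ybar N / (k / 2) - 1) \<in> O(\<lambda>N. 1 / sqrt (real N))"
    unfolding ybar_def using landau_part[of k] k by simp
  show ?thesis
    apply (rule exI[where x=ybar])
    using main L by blast
qed


end
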